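(* Let $m\ge 2$ and let $a_1,a_2,b_1,\dots,b_m,c_1,\dots,c_m\in\mathbb{C}$ satisfy $a_1\ne a_2$, $b_i\ne b_j$ and $c_i\ne c_j$ for $i\ne j$, and $a_1+(m-1)a_2=\sum_{i=1}^m(b_i+c_i)$. Define $m\times m$ complex matrices ${\bf B},{\bf C}$ by $$B_{ij}=\begin{cases}b_i+c_{m+1-i}-a_2 & i<j\\ b_i & i=j\\ 0 & i>j\end{cases},\qquad C_{ij}=\begin{cases}0 & i<j\\ c_{m+1-i} & i=j\\ b_i+c_{m+1-i}-a_2 & i>j\end{cases}.$$ Then ${\bf A}={\bf B}+{\bf C}$ is diagonalizable and its eigenvalues, with multiplicity, are $a_1$ (once) and $a_2$ (with multiplicity $m-1$).
   Context: All matrices act on $V=\mathbb{C}^m$ with its standard basis. *)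

theory Defs
  imports "Jordan_Normal_Form.Matrix" "Jordan_Normal_Form.Char_Poly"
begin

text \<open>Entries are indexed 1..m in the paper; Isabelle matrices are 0-indexed, so
  paper entry (i,j) is entry (i-1,j-1) here. The vectors b, c are indexed 1..m.\<close>

definition matB :: "nat \<Rightarrow> complex \<Rightarrow> (nat \<Rightarrow> complex) \<Rightarrow> (nat \<Rightarrow> complex) \<Rightarrow> complex mat" where
  "matB m a2 b c = mat m m (\<lambda>(i, j).
      if i < j then b (i+1) + c (m - i) - a2
      else if i = j then b (i+1) else 0)"

definition matC :: "nat \<Rightarrow> complex \<Rightarrow> (nat \<Rightarrow> complex) \<Rightarrow> (nat \<Rightarrow> complex) \<Rightarrow> complex mat" where
  "matC m a2 b c = mat m m (\<lambda>(i, j).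
      if i < j then 0
      else if i = j then c (m - i) else b (i+1) + c (m - i) - a2)"

definition diagonalizable :: "'a::semiring_1 mat \<Rightarrow> bool" where
  "diagonalizable A \<longleftrightarrow> (\<exists>D. diagonal_mat D \<and> similar_mat A D)"

end

theory Submission
  imports Defs
begin

lemma mat_mult_mat: "mat m n f * mat n p g = mat m p (\<lambda>(i,k). \<Sum>l<n. f (i,l) * g (l,k))"
  by (rule eq_matI) (auto simp: scalar_prod_def row_def col_def lessThan_atLeast0)

lemma sum_delta_mult[simp]:
  fixes m i :: nat
  shows "(\<Sum>l<m. (if i = l then 1 else 0) * (f l :: complex)) = (if i < m then f i else 0)"
  "(\<Sum>l<m. (f l :: complex) * (if l = i then 1 else 0)) = (if i < m then f i else 0)"
proof -
  have "(\<Sum>l<m. (if i = l then 1 else 0) * (f l :: complex)) = (\<Sum>l<m. if i = l then f i else 0)"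
    by (rule sum.cong) auto
  then show "(\<Sum>l<m. (if i = l then 1 else 0) * (f l :: complex)) = (if i < m then f i else 0)"
    by (simp add: sum.delta sum.delta')
  have "(\<Sum>l<m. (f l :: complex) * (if l = i then 1 else 0)) = (\<Sum>l<m. if l = i then f i else 0)"
    by (rule sum.cong) auto
  then show "(\<Sum>l<m. (f l :: complex) * (if l = i then 1 else 0)) = (if i < m then f i else 0)"
    by (simp add: sum.delta sum.delta')
qed

lemma QP:
  fixes d :: "nat \<Rightarrow> complex"
  assumes s: "(\<Sum>l<m. d l) = s" "s \<noteq> 0" and m: "0 < m"
  shows "mat m m (\<lambda>(i,l). if i = 0 then 1/s else d i / s - (if i = l then 1 else 0))
       * mat m m (\<lambda>(l,k). if k = 0 then d l else (if l = 0 then 1 else 0) - (if l = k then 1 else 0))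
       = 1\<^sub>m m"
proof -
  have *: "(\<Sum>l<m. (if i = 0 then 1 / s else d i / s - (if i = l then 1 else 0)) *
          (if k = 0 then d l else (if l = 0 then 1 else 0) - (if l = k then 1 else 0))) =
         (if i = k then 1 else 0)" if i: "i < m" and k: "k < m" for i k
  proof (cases "i = 0"; cases "k = 0")
    assume "i = 0" "k = 0"
    then show ?thesis using s m by (simp add: sum_divide_distrib[symmetric])
  next
    assume "i = 0" "k \<noteq> 0"
    then show ?thesis using s m i k by (simp add: right_diff_distrib sum_subtractf sum_divide_distrib[symmetric])
  next
    assume "i \<noteq> 0" "k = 0"
    then show ?thesis using s m i k proof -
      have "(\<Sum>l<m. d i * d l / s) = d i * (\<Sum>l<m. d l) / s"
        by (simp add: sum_distrib_left sum_divide_distrib)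
      then show ?thesis using \<open>i \<noteq> 0\<close> \<open>k = 0\<close> s m i k
        by (simp add: left_diff_distrib sum_subtractf)
    qed
  next
    assume "i \<noteq> 0" "k \<noteq> 0"
    then show ?thesis using s m i k by (simp add: left_diff_distrib right_diff_distrib sum_subtractf sum_divide_distrib[symmetric])
  qed
  show ?thesis by (rule eq_matI) (auto simp: mat_mult_mat * simp del: sum_delta_mult)
qed

lemma mult_diag_right:
  fixes f :: "nat \<times> nat \<Rightarrow> complex"
  shows "mat m m f * mat m m (\<lambda>(l,k). if l = k then e k else 0) = mat m m (\<lambda>(i,k). f (i,k) * e k)"
proof -
  have "(\<Sum>l<m. f (i,l) * (if l = k then e k else 0)) = f (i,k) * e k" if "k < m" for i k
  proof -
    have "(\<Sum>l<m. f (i,l) * (if l = k then e k else 0)) = (\<Sum>l<m. if l = k then f (i,k) * e k else 0)"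
      by (rule sum.cong) auto
    then show ?thesis using that by simp
  qed
  then show ?thesis by (auto simp: mat_mult_mat intro!: eq_matI)
qed

lemma AP:
  fixes d :: "nat \<Rightarrow> complex"
  assumes s: "(\<Sum>l<m. d l) = s" and m: "0 < m"
  shows "mat m m (\<lambda>(i,l). a2 * (if i = l then 1 else 0) + d i)
       * mat m m (\<lambda>(l,k). if k = 0 then d l else (if l = 0 then 1 else 0) - (if l = k then 1 else 0))
       = mat m m (\<lambda>(l,k). if k = 0 then d l else (if l = 0 then 1 else 0) - (if l = k then 1 else 0))
         * mat m m (\<lambda>(l,k). if l = k then (if k = 0 then a2 + s else a2) else 0)"
proof -
  have *: "(\<Sum>l<m. (a2 * (if i = l then 1 else 0) + d i) *
          (if k = 0 then d l else (if l = 0 then 1 else 0) - (if l = k then 1 else 0))) =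
         (if k = 0 then d i else (if i = 0 then 1 else 0) - (if i = k then 1 else 0)) * (if k = 0 then a2 + s else a2)" 
    if i: "i < m" and k: "k < m" for i k
  proof (cases "k = 0")
    case True
    have "(\<Sum>l<m. d i * d l) = d i * s" unfolding s[symmetric] by (simp add: sum_distrib_left)
    have e1: "(\<Sum>l<m. d i * d l) = d i * s" unfolding s[symmetric] by (simp add: sum_distrib_left)
    have e2: "(\<Sum>l<m. a2 * (if i = l then 1 else 0) * d l) = a2 * d i"
      using i by (simp add: mult.assoc sum_distrib_left[symmetric])
    have "(\<Sum>l<m. (a2 * (if i = l then 1 else 0) + d i) * d l) = a2 * d i + d i * s"
      by (simp only: distrib_right sum.distrib e1 e2)
    then show ?thesis using True by (simp add: algebra_simps)
  next
    case False
    then show ?thesis using i k m by (simp add: distrib_right sum.distrib mult.assoc right_diff_distrib sum_subtractf sum_distrib_left[symmetric])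
  qed
  show ?thesis unfolding mult_diag_right
    by (rule eq_matI) (auto simp: mat_mult_mat * simp del: sum_delta_mult)
qed

theorem theorem2p2:
  fixes m :: nat and a1 a2 :: complex and b c :: "nat \<Rightarrow> complex"
  assumes "m \<ge> 2"
    and "a1 \<noteq> a2"
    and "inj_on b {1..m}"
    and "inj_on c {1..m}"
    and "a1 + of_nat (m - 1) * a2 = (\<Sum>i=1..m. b i + c i)"
  shows "diagonalizable (matB m a2 b c + matC m a2 b c)
       \<and> char_poly (matB m a2 b c + matC m a2 b c) = [:-a1, 1:] * [:-a2, 1:] ^ (m - 1)"
proof -
  define d where "d i = b (i+1) + c (m - i) - a2" for i
  define s where "s = a1 - a2"
  have m0: "0 < m" using assms(1) by simp
  have sb: "(\<Sum>i=1..m. b i) = (\<Sum>l<m. b (l+1))"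
    using sum.atLeast1_atMost_eq[of b m] by simp
  have sc: "(\<Sum>i=1..m. c i) = (\<Sum>l<m. c (m - l))"
  proof -
    have "(\<Sum>i=1..m. c i) = (\<Sum>l<m. c (Suc l))" using sum.atLeast1_atMost_eq[of c m] by simp
    also have "\<dots> = (\<Sum>l<m. c (Suc (m - Suc l)))" by (rule sum.nat_diff_reindex[symmetric])
    also have "\<dots> = (\<Sum>l<m. c (m - l))" by (rule sum.cong) (auto simp: Suc_diff_Suc)
    finally show ?thesis .
  qed
  have ds: "(\<Sum>l<m. d l) = s"
  proof -
    have "(\<Sum>l<m. d l) = (\<Sum>l<m. b (l+1)) + (\<Sum>l<m. c (m - l)) - of_nat m * a2"
      by (simp add: d_def sum.distrib sum_subtractf)
    also have "\<dots> = (\<Sum>i=1..m. b i + c i) - of_nat m * a2" by (simp only: sum.distrib sb sc)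
    also have "\<dots> = a1 + of_nat (m - 1) * a2 - of_nat m * a2" using assms(5) by simp
    also have "\<dots> = s" using m0 by (simp add: s_def of_nat_diff algebra_simps)
    finally show ?thesis .
  qed
  have s0: "s \<noteq> 0" using assms(2) by (simp add: s_def)
  define A where "A = matB m a2 b c + matC m a2 b c"
  have A: "A = mat m m (\<lambda>(i,l). a2 * (if i = l then 1 else 0) + d i)"
    unfolding A_def matB_def matC_def d_def by (rule eq_matI) auto
  define P where "P = mat m m (\<lambda>(l,k). if k = 0 then d l else (if l = 0 then 1 else 0) - (if l = k then 1 else (0::complex)))"
  define Q where "Q = mat m m (\<lambda>(i,l). if i = 0 then 1/s else d i / s - (if i = l then 1 else (0::complex)))"
  define D where "D = mat m m (\<lambda>(l,k). if l = k then (if k = 0 then a2 + s else a2) else (0::complex))"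
  have QP: "Q * P = 1\<^sub>m m" unfolding Q_def P_def by (rule QP[OF ds s0 m0])
  have PQ: "P * Q = 1\<^sub>m m"
    by (rule mat_mult_left_right_inverse[OF _ _ QP]) (auto simp: P_def Q_def)
  have AP: "A * P = P * D" unfolding A P_def D_def by (rule AP[OF ds m0])
  have cA: "A \<in> carrier_mat m m" and cP: "P \<in> carrier_mat m m" and cQ: "Q \<in> carrier_mat m m"
    and cD: "D \<in> carrier_mat m m" by (auto simp: A P_def Q_def D_def)
  have "A = A * (P * Q)" using cA by (simp add: PQ)
  also have "\<dots> = (A * P) * Q" using cA cP cQ by (simp add: assoc_mult_mat)
  also have "\<dots> = P * D * Q" by (simp add: AP)
  finally have APDQ: "A = P * D * Q" .
  have sim: "similar_mat A D"
    unfolding similar_mat_def similar_mat_wit_def Let_def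
    using cA cP cQ cD PQ QP APDQ by (intro exI[of _ P] exI[of _ Q]) auto
  have diag: "diagonal_mat D" by (auto simp: diagonal_mat_def D_def)
  have ut: "upper_triangular D" by (auto simp: upper_triangular_def D_def)
  have "diag_mat D = (a2 + s) # replicate (m - 1) a2"
  proof -
    have "diag_mat D = map (\<lambda>k. if k = 0 then a2 + s else a2) [0..<m]"
      by (auto simp: diag_mat_def D_def intro!: map_cong)
    also have "[0..<m] = 0 # [1..<m]" using m0 by (simp add: upt_conv_Cons)
    finally have *: "diag_mat D = (a2 + s) # map (\<lambda>k. if k = 0 then a2 + s else a2) [1..<m]" by simp
    have "map (\<lambda>k. if k = 0 then a2 + s else a2) [1..<m] = map (\<lambda>k. a2) [1..<m]"
      by (rule map_cong) auto
    then show ?thesis unfolding * by (simp add: map_replicate_const)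
  qed
  then have "char_poly D = [:-a1, 1:] * [:-a2, 1:] ^ (m - 1)"
    using char_poly_upper_triangular[OF cD ut] by (simp add: s_def)
  then show ?thesis using sim diag char_poly_similar[OF sim]
    unfolding diagonalizable_def A_def[symmetric] by auto
qed

end
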